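(* The assignment $\mathrm{L}:\mathbf{TArb}\to\mathbf{FinArb}^<_\star$ (defined below) is a well-defined functor: for every object $G$ of $\mathbf{TArb}$, $\mathrm{L}(G)$ is a finite edge-ordered arborescence, and for every morphism $h:G\to H$ of $\mathbf{TArb}$, $\mathrm{L}(h)$ is a homomorphism of pointed edge-ordered graphs $\mathrm{L}(G)\to\mathrm{L}(H)$; moreover $\mathrm{L}$ preserves identities and composition.
   Context: A (directed) graph is $(V,\to)$ with $\to\subseteq V\times V$; $N(u)$ is the set of outgoing edges of $u$. A pointed graph has a distinguished vertex $v_0$; connected means every vertex is reachable by a path from $v_0$. A path is a finite sequence $v_1\to\cdots\to v_n$ of vertices joined by edges, with length $|\pi|$; co-initial paths share their source; $\pi\sqsubset\sigma$ means $\pi$ is a proper prefix of $\sigma$. A finite edge-ordered graph is a finite graph with a strict linear order $\triangleleft$ on each neighborhood. Lexicographic path order: if $\pi\sqsubset\sigma$ then $\pi\prec\sigma$ (symmetrically); otherwise, with $\zeta$ the longest common prefix, $u$ its target and $v_1,v_2$ the next vertices, $\pi\prec\sigma$ iff $u\to v_1\triangleleft u\to v_2$. Shortlex: $\pi\prec^s\sigma$ iff $|\pi|<|\sigma|$ or ($|\pi|=|\sigma|$ and $\pi\prec\sigma$). A homomorphism of finite pointed edge-ordered graphs $h:G\to H$ is a vertex map with (i) $u\to v$ implies $h(u)\to h(v)$; (ii) the distinguished vertex of $G$ is the unique vertex mapped to the distinguished vertex of $H$; (iii) $u\to v_1\triangleleft u\to v_2$ implies $h(u)\to h(v_1)\triangleleft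 h(u)\to h(v_2)$. An arborescence is a pointed graph with a unique path $v_0\rightsquigarrow u$ for every $u$. $\mathbf{FinArb}^<_\star$: finite edge-ordered arborescences with homomorphisms of pointed edge-ordered graphs. $\mathbf{TArb}$: objects are finite, pointed, connected, edge-ordered graphs $G$ for which there is a finite, connected, pointed, edge-ordered arborescence $T$ on the same vertices with the same distinguished point such that the edge relation of $G$ is the transitive closure of that of $T$ and $u\to v_1\triangleleft u\to v_2$ in $G$ iff $(v_0\rightsquigarrow v_1)\prec^s(v_0\rightsquigarrow v_2)$ for the unique paths in $T$; in such $G$ longest paths $u\rightsquigarrow v$ are unique. Morphisms of $\mathbf{TArb}$ are homomorphisms satisfying (i)–(iii) that map the longest path $u\rightsquigarrow v$ to the longest path $h(u)\rightsquigarrow h(v)$. $\mathrm{L}(G)$ has the vertices and distinguished point of $G$, contains an edge $u\to v$ iff it lies on the longest path $v_0\rightsquigarrow v$ in $G$, with neighborhood order inherited from $G$; $\mathrm{L}(h)(v)=h(v)$. *)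

theory Defs
  imports Main
begin

text \<open>A finite pointed edge-ordered graph: vertex set, edge relation, distinguished
  vertex, and for every vertex u a relation eord u v1 v2 meaning (u->v1) precedes (u->v2).\<close>

record 'a eograph =
  verts :: "'a set"
  arcs  :: "('a \<times> 'a) set"
  root  :: 'a
  eord  :: "'a \<Rightarrow> 'a \<Rightarrow> 'a \<Rightarrow> bool"

definition nbhd :: "('a, 'b) eograph_scheme \<Rightarrow> 'a \<Rightarrow> 'a set" where
  "nbhd G u = {v. (u, v) \<in> arcs G}"

definition wf_eog :: "('a, 'b) eograph_scheme \<Rightarrow> bool" where
  "wf_eog G \<longleftrightarrow> finite (verts G) \<and> arcs G \<subseteq> verts G \<times> verts G \<and> root G \<in> verts G \<and>
     (\<forall>u v1 v2. eord G u v1 v2 \<longrightarrow> v1 \<in> nbhd G u \<and> v2 \<in> nbhd G u) \<and>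
     (\<forall>u v. \<not> eord G u v v) \<and>
     (\<forall>u v1 v2 v3. eord G u v1 v2 \<longrightarrow> eord G u v2 v3 \<longrightarrow> eord G u v1 v3) \<and>
     (\<forall>u v1 v2. v1 \<in> nbhd G u \<longrightarrow> v2 \<in> nbhd G u \<longrightarrow> v1 \<noteq> v2 \<longrightarrow>
                eord G u v1 v2 \<or> eord G u v2 v1)"

text \<open>Paths are nonempty vertex lists with consecutive vertices joined by edges;
  the length of a path p is length p - 1.\<close>
definition is_path :: "('a, 'b) eograph_scheme \<Rightarrow> 'a list \<Rightarrow> bool" where
  "is_path G p \<longleftrightarrow> p \<noteq> [] \<and> set p \<subseteq> verts G \<and> (\<forall>(x, y) \<in> set (zip p (tl p)). (x, y) \<in> arcs G)"

definition path_from_to :: "('a, 'b) eograph_scheme \<Rightarrow> 'a \<Rightarrow> 'a \<Rightarrow> 'a list \<Rightarrow> bool" where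
  "path_from_to G u v p \<longleftrightarrow> is_path G p \<and> hd p = u \<and> last p = v"

definition connected_eog :: "('a, 'b) eograph_scheme \<Rightarrow> bool" where
  "connected_eog G \<longleftrightarrow> (\<forall>v \<in> verts G. \<exists>p. path_from_to G (root G) v p)"

definition arborescence :: "('a, 'b) eograph_scheme \<Rightarrow> bool" where
  "arborescence G \<longleftrightarrow> root G \<in> verts G \<and> (\<forall>v \<in> verts G. \<exists>!p. path_from_to G (root G) v p)"

definition lex_less :: "('a, 'b) eograph_scheme \<Rightarrow> 'a list \<Rightarrow> 'a list \<Rightarrow> bool" where
  "lex_less G p q \<longleftrightarrow> (\<exists>r. r \<noteq> [] \<and> q = p @ r) \<or>
     (\<not> (\<exists>r. r \<noteq> [] \<and> p = q @ r) \<and>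
      (\<exists>z v1 v2 r1 r2. p = z @ v1 # r1 \<and> q = z @ v2 # r2 \<and> z \<noteq> [] \<and> v1 \<noteq> v2 \<and>
                       eord G (last z) v1 v2))"

definition shortlex_less :: "('a, 'b) eograph_scheme \<Rightarrow> 'a list \<Rightarrow> 'a list \<Rightarrow> bool" where
  "shortlex_less G p q \<longleftrightarrow> length p < length q \<or> (length p = length q \<and> lex_less G p q)"

definition longest_path :: "('a, 'b) eograph_scheme \<Rightarrow> 'a \<Rightarrow> 'a \<Rightarrow> 'a list \<Rightarrow> bool" where
  "longest_path G u v p \<longleftrightarrow> path_from_to G u v p \<and>
     (\<forall>q. path_from_to G u v q \<longrightarrow> length q \<le> length p)"

definition eo_hom :: "('a, 'c) eograph_scheme \<Rightarrow> ('b, 'd) eograph_scheme \<Rightarrow> ('a \<Rightarrow> 'b) \<Rightarrow> bool" where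
  "eo_hom G H h \<longleftrightarrow> (\<forall>v \<in> verts G. h v \<in> verts H) \<and>
     (\<forall>u v. (u, v) \<in> arcs G \<longrightarrow> (h u, h v) \<in> arcs H) \<and>
     (\<forall>v \<in> verts G. h v = root H \<longleftrightarrow> v = root G) \<and>
     (\<forall>u v1 v2. eord G u v1 v2 \<longrightarrow> eord H (h u) (h v1) (h v2))"

definition finarb_obj :: "('a, 'b) eograph_scheme \<Rightarrow> bool" where
  "finarb_obj G \<longleftrightarrow> wf_eog G \<and> arborescence G"

definition tarb_obj :: "'a eograph \<Rightarrow> bool" where
  "tarb_obj G \<longleftrightarrow> wf_eog G \<and> connected_eog G \<and>
     (\<exists>T :: 'a eograph. wf_eog T \<and> connected_eog T \<and> arborescence T \<and>
        verts T = verts G \<and> root T = root G \<and> arcs G = (arcs T)\<^sup>+ \<and>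
        (\<forall>u v1 v2. (u, v1) \<in> arcs G \<longrightarrow> (u, v2) \<in> arcs G \<longrightarrow>
           (eord G u v1 v2 \<longleftrightarrow>
             (\<forall>p1 p2. path_from_to T (root T) v1 p1 \<longrightarrow> path_from_to T (root T) v2 p2 \<longrightarrow>
                shortlex_less T p1 p2))))"

definition tarb_mor :: "'a eograph \<Rightarrow> 'b eograph \<Rightarrow> ('a \<Rightarrow> 'b) \<Rightarrow> bool" where
  "tarb_mor G H h \<longleftrightarrow> tarb_obj G \<and> tarb_obj H \<and> eo_hom G H h \<and>
     (\<forall>u v p. longest_path G u v p \<longrightarrow> longest_path H (h u) (h v) (map h p))"

definition L_obj :: "'a eograph \<Rightarrow> 'a eograph" where
  "L_obj G = \<lparr> verts = verts G,
     arcs = {(u, v). \<exists>p. longest_path G (root G) v p \<and> (u, v) \<in> set (zip p (tl p))},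
     root = root G,
     eord = (\<lambda>u v1 v2. eord G u v1 v2 \<and>
        (\<exists>p. longest_path G (root G) v1 p \<and> (u, v1) \<in> set (zip p (tl p))) \<and>
        (\<exists>p. longest_path G (root G) v2 p \<and> (u, v2) \<in> set (zip p (tl p)))) \<rparr>"

definition L_mor :: "('a \<Rightarrow> 'b) \<Rightarrow> ('a \<Rightarrow> 'b)" where
  "L_mor h = h"

end

theory Submission imports Defs begin

lemma zip_succ: "(\<forall>(x, y) \<in> set (zip p (tl p)). R x y) \<longleftrightarrow> successively R p"
  by (induction R p rule: successively.induct) auto

lemma zip_mem: "(x, y) \<in> set (zip (a @ x # y # b) (tl (a @ x # y # b)))"
  by (induction a rule: induct_list012) auto

lemma not_succ: "\<not> successively R p \<Longrightarrow> \<exists>a x y b. p = a @ x # y # b \<and> \<not> R x y"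
proof (induction R p rule: successively.induct)
  case (3 P x y xs)
  show ?case
  proof (cases "P x y")
    case True
    with 3 obtain a u v b where "y # xs = a @ u # v # b" "\<not> P u v" by auto
    then show ?thesis by (metis append_Cons)
  next
    case False then show ?thesis by (metis append_Nil)
  qed
qed auto

lemma succ_glue: "successively P (xs @ [y]) \<Longrightarrow> successively P (y # ys) \<Longrightarrow> successively P (xs @ y # ys)"
  by (induction xs rule: induct_list012) (auto simp: successively_Cons)

lemma trancl_chain: "(x, y) \<in> r\<^sup>+ \<Longrightarrow> \<exists>zs. successively (\<lambda>a b. (a, b) \<in> r) (x # zs @ [y])"
proof (induction rule: trancl_induct)
  case (base y)
  then show ?case by (intro exI[of _ "[]"]) auto
next
  case (step y z)
  then obtain zs where "successively (\<lambda>a b. (a, b) \<in> r) (x # zs @ [y])" by blast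
  then have "successively (\<lambda>a b. (a, b) \<in> r) ((x # zs @ [y]) @ [z])"
    using step(2) by (subst successively_append_iff) auto
  then show ?case by (intro exI[of _ "zs @ [y]"]) simp
qed

lemma expand:
  assumes "successively (\<lambda>a b. (a, b) \<in> r\<^sup>+) q" "q \<noteq> []"
  shows "\<exists>q'. successively (\<lambda>a b. (a, b) \<in> r) q' \<and> hd q' = hd q \<and> last q' = last q \<and> length q \<le> length q'"
  using assms
proof (induction q rule: induct_list012)
  case (2 x)
  then show ?case by (intro exI[of _ "[x]"]) auto
next
  case (3 x y rest)
  then obtain q'' where q'': "successively (\<lambda>a b. (a, b) \<in> r) q''" "hd q'' = y" "last q'' = last (y # rest)"
     "length (y # rest) \<le> length q''" by auto
  from 3 obtain zs where zs: "successively (\<lambda>a b. (a, b) \<in> r) (x # zs @ [y])" 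
    using trancl_chain by fastforce
  have ne: "q'' \<noteq> []" using q''(4) by auto
  have "successively (\<lambda>a b. (a, b) \<in> r) ((x # zs) @ q'')"
  proof -
    obtain t where t: "q'' = y # t" using ne q''(2) by (cases q'') auto
    show ?thesis using succ_glue[of _ "x # zs" y t] zs q''(1) t by simp
  qed
  moreover have "last ((x # zs) @ q'') = last (x # y # rest)" using q'' ne by simp
  ultimately show ?case using q''(4) ne
    by (intro exI[of _ "(x # zs) @ q''"]) auto
qed auto

lemma succ_verts: "successively (\<lambda>a b. (a, b) \<in> E) (x # xs) \<Longrightarrow> E \<subseteq> V \<times> V \<Longrightarrow> set xs \<subseteq> V"
  by (induction xs arbitrary: x) (auto simp: successively_Cons)

lemma is_path_succ: "is_path G p \<longleftrightarrow> p \<noteq> [] \<and> set p \<subseteq> verts G \<and> successively (\<lambda>a b. (a, b) \<in> arcs G) p"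
  unfolding is_path_def using zip_succ[of p "\<lambda>a b. (a, b) \<in> arcs G"] by auto

lemma part1:
  fixes G T :: "'a eograph"
  assumes wfG: "wf_eog G" and wfT: "wf_eog T" and arbT: "arborescence T" and vT: "verts T = verts G"
    and rT: "root T = root G" and aG: "arcs G = (arcs T)\<^sup>+"
  shows "finarb_obj (L_obj G)"
proof -
  let ?R = "\<lambda>a b. (a, b) \<in> arcs T"
  let ?S = "\<lambda>a b. (a, b) \<in> arcs G"
  have aTV: "arcs T \<subseteq> verts G \<times> verts G" using wfT vT unfolding wf_eog_def by auto
  have rootV: "root G \<in> verts G" using wfG unfolding wf_eog_def by auto
  have TG: "is_path G p" if "is_path T p" for p
    using that vT unfolding is_path_succ
    by (auto elim!: successively_mono simp: aG)
  have s3: "successively ?R p" if lp: "longest_path G (root G) v p" for v p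
  proof (rule ccontr)
    assume "\<not> successively ?R p"
    then obtain a x y b where p: "p = a @ x # y # b" and nxy: "(x, y) \<notin> arcs T"
      using not_succ by blast
    have pG: "is_path G p" and hp: "hd p = root G" and lp': "last p = v"
      using lp unfolding longest_path_def path_from_to_def by auto
    have sp: "successively ?S p" and pV: "set p \<subseteq> verts G" using pG unfolding is_path_succ by auto
    have "(x, y) \<in> arcs G" using sp p by (simp add: successively_append_iff)
    then obtain zs where zs: "successively ?R (x # zs @ [y])" using trancl_chain aG by fastforce
    have zsne: "zs \<noteq> []" using zs nxy by auto
    have zsV: "set zs \<subseteq> verts G" using succ_verts[OF zs aTV] by auto
    have zsG: "successively ?S (x # zs @ [y])" using zs by (auto elim!: successively_mono simp: aG)
    have s1: "successively ?S (a @ [x])" and s2: "successively ?S (y # b)"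
      using sp p successively_append_iff[of ?S "a @ [x]" "y # b"] by auto
    define q where "q = a @ x # zs @ y # b"
    have "successively ?S ((x # zs) @ y # b)"
      using succ_glue[of ?S "x # zs" y b] zsG s2 by simp
    then have "successively ?S q" unfolding q_def using succ_glue[of ?S a x "zs @ y # b"] s1 by simp
    moreover have "set q \<subseteq> verts G" using pV zsV p unfolding q_def by auto
    moreover have "hd q = root G" using hp p unfolding q_def by (cases a) auto
    moreover have "last q = v" using lp' p unfolding q_def by simp
    ultimately have "path_from_to G (root G) v q" unfolding path_from_to_def is_path_succ q_def by auto
    then have "length q \<le> length p" using lp unfolding longest_path_def by auto
    then show False using zsne p unfolding q_def by simp
  qed
  have s4: "length q \<le> length tp" if tp: "path_from_to T (root G) v tp" and q: "path_from_to G (root G) v q" for v tp q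
  proof -
    have sq: "successively (\<lambda>a b. (a, b) \<in> (arcs T)\<^sup>+) q" "q \<noteq> []"
      using q aG unfolding path_from_to_def is_path_succ by auto
    obtain q' where q': "successively ?R q'" "hd q' = hd q" "last q' = last q" "length q \<le> length q'"
      using expand[OF sq] by blast
    have ne: "q' \<noteq> []" using q' sq by auto
    have "set q' \<subseteq> verts G"
    proof -
      have "q' = hd q' # tl q'" using ne by simp
      then have "set (tl q') \<subseteq> verts G" using succ_verts[OF _ aTV, of "hd q'" "tl q'"] q'(1) by simp
      moreover have "hd q' \<in> verts G" using q'(2) q rootV unfolding path_from_to_def by simp
      ultimately show ?thesis using ne by (cases q') auto
    qed
    then have "path_from_to T (root G) v q'" using q' q ne vT unfolding path_from_to_def is_path_succ by auto
    moreover have "v \<in> verts T" using tp unfolding path_from_to_def is_path_def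
      by (metis last_in_set subset_iff)
    ultimately have "q' = tp" using arbT tp rT unfolding arborescence_def by metis
    then show ?thesis using q' by simp
  qed
  have s5: "\<exists>p. longest_path G (root G) v p" if v: "v \<in> verts G" for v
  proof -
    obtain tp where tp: "path_from_to T (root G) v tp" using arbT v vT rT unfolding arborescence_def by metis
    have tpG: "path_from_to G (root G) v tp" using TG tp unfolding path_from_to_def by auto
    have "\<exists>n. (\<exists>q. path_from_to G (root G) v q \<and> length q = n) \<and>
       (\<forall>m. (\<exists>q. path_from_to G (root G) v q \<and> length q = m) \<longrightarrow> m \<le> n)"
      by (rule Nat.ex_has_greatest_nat[where k = "length tp" and b = "length tp"]) (use tpG s4[OF tp] in auto)
    then show ?thesis unfolding longest_path_def by blast
  qed
  have arcsL: "arcs (L_obj G) = arcs T"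
  proof
    show "arcs (L_obj G) \<subseteq> arcs T"
    proof
      fix e assume "e \<in> arcs (L_obj G)"
      then obtain u v p where e: "e = (u, v)" and lp: "longest_path G (root G) v p" and uv: "(u, v) \<in> set (zip p (tl p))"
        unfolding L_obj_def by auto
      show "e \<in> arcs T" using s3[OF lp] uv e zip_succ[of p ?R] by auto
    qed
  next
    show "arcs T \<subseteq> arcs (L_obj G)"
    proof
      fix e assume eT: "e \<in> arcs T"
      then obtain u v where e: "e = (u, v)" by (cases e)
      have uV: "u \<in> verts G" and vV: "v \<in> verts G" using eT e aTV by auto
      obtain p where lp: "longest_path G (root G) v p" using s5 vV by blast
      obtain tu where tu: "path_from_to T (root G) u tu" using arbT uV vT rT unfolding arborescence_def by metis
      have "successively ?R p" using s3[OF lp] .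
      then have pT: "path_from_to T (root G) v p" using lp vT unfolding longest_path_def path_from_to_def is_path_succ by auto
      have tune: "tu \<noteq> []" using tu unfolding path_from_to_def is_path_def by auto
      have "successively ?R (butlast tu @ [u])" using tu tune unfolding path_from_to_def is_path_succ
        by (metis append_butlast_last_id)
      then have "successively ?R (butlast tu @ [u, v])" using succ_glue[of ?R "butlast tu" u "[v]"] eT e by simp
      moreover have "set (butlast tu @ [u, v]) \<subseteq> verts T"
        using tu vV vT unfolding path_from_to_def is_path_def by (auto dest: in_set_butlastD)
      moreover have "hd (butlast tu @ [u, v]) = root G" using tu tune unfolding path_from_to_def
        by (metis append_butlast_last_id append_Cons append_Nil hd_append2 list.sel(1) not_Cons_self2) 
      ultimately have "path_from_to T (root G) v (butlast tu @ [u, v])"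
        unfolding path_from_to_def is_path_succ by simp
      then have "p = butlast tu @ [u, v]" using pT arbT vV vT rT unfolding arborescence_def by metis
      then have "(u, v) \<in> set (zip p (tl p))" using zip_mem[of u v "butlast tu" "[]"] by simp
      then show "e \<in> arcs (L_obj G)" using lp e unfolding L_obj_def by auto
    qed
  qed
  have vL: "verts (L_obj G) = verts T" and rL: "root (L_obj G) = root T" using vT rT unfolding L_obj_def by auto
  have pL: "path_from_to (L_obj G) = path_from_to T"
    by (intro ext) (simp add: path_from_to_def is_path_def arcsL vL)
  have arbL: "arborescence (L_obj G)" using arbT unfolding arborescence_def pL vL rL .
  have wfL: "wf_eog (L_obj G)"
  proof -
    have aL: "(u, v) \<in> arcs (L_obj G) \<longleftrightarrow> (\<exists>p. longest_path G (root G) v p \<and> (u, v) \<in> set (zip p (tl p)))" for u v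
      unfolding L_obj_def by simp
    have eL: "eord (L_obj G) u v1 v2 \<longleftrightarrow> eord G u v1 v2 \<and> (u, v1) \<in> arcs (L_obj G) \<and> (u, v2) \<in> arcs (L_obj G)" for u v1 v2
      unfolding aL by (simp add: L_obj_def)
    have LG: "(u, v) \<in> arcs (L_obj G) \<Longrightarrow> (u, v) \<in> arcs G" for u v using arcsL aG by auto
    have f: "finite (verts (L_obj G))" using wfG vL vT unfolding wf_eog_def by simp
    have a: "arcs (L_obj G) \<subseteq> verts (L_obj G) \<times> verts (L_obj G)" using arcsL aTV vL vT by simp
    have r: "root (L_obj G) \<in> verts (L_obj G)" using rootV vL vT rL rT by simp
    have n: "\<forall>u v1 v2. eord (L_obj G) u v1 v2 \<longrightarrow> v1 \<in> nbhd (L_obj G) u \<and> v2 \<in> nbhd (L_obj G) u"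
      unfolding eL nbhd_def by simp
    have i: "\<forall>u v. \<not> eord (L_obj G) u v v" using wfG unfolding eL wf_eog_def by simp
    have t: "\<forall>u v1 v2 v3. eord (L_obj G) u v1 v2 \<longrightarrow> eord (L_obj G) u v2 v3 \<longrightarrow> eord (L_obj G) u v1 v3"
      using wfG unfolding eL wf_eog_def by blast
    have to: "\<forall>u v1 v2. v1 \<in> nbhd (L_obj G) u \<longrightarrow> v2 \<in> nbhd (L_obj G) u \<longrightarrow> v1 \<noteq> v2 \<longrightarrow>
                eord (L_obj G) u v1 v2 \<or> eord (L_obj G) u v2 v1"
    proof (intro allI impI)
      fix u v1 v2 assume h: "v1 \<in> nbhd (L_obj G) u" "v2 \<in> nbhd (L_obj G) u" "v1 \<noteq> v2"
      then have "v1 \<in> nbhd G u" "v2 \<in> nbhd G u" using LG unfolding nbhd_def by auto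
      then have "eord G u v1 v2 \<or> eord G u v2 v1" using wfG h(3) unfolding wf_eog_def by blast
      then show "eord (L_obj G) u v1 v2 \<or> eord (L_obj G) u v2 v1" using h unfolding eL nbhd_def by auto
    qed
    show ?thesis unfolding wf_eog_def using f a r n i t to by blast
  qed
  show ?thesis using wfL arbL unfolding finarb_obj_def by simp
qed

lemma zip_map: "set (zip (map h p) (tl (map h p))) = (\<lambda>(a, b). (h a, h b)) ` set (zip p (tl p))"
  by (induction p rule: induct_list012) auto

lemma part2:
  fixes G :: "'a eograph" and H :: "'b eograph"
  assumes m: "tarb_mor G H h"
  shows "eo_hom (L_obj G) (L_obj H) (L_mor h)"
proof -
  have wfG: "wf_eog G" and hom: "eo_hom G H h"
    and lp: "\<And>u v p. longest_path G u v p \<Longrightarrow> longest_path H (h u) (h v) (map h p)"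
    using m unfolding tarb_mor_def tarb_obj_def by auto
  have hr: "h (root G) = root H" using hom wfG unfolding eo_hom_def wf_eog_def by auto
  have aL: "(u, v) \<in> arcs (L_obj G) \<longleftrightarrow> (\<exists>p. longest_path G (root G) v p \<and> (u, v) \<in> set (zip p (tl p)))" for u v
    unfolding L_obj_def by simp
  have arc: "(h u, h v) \<in> arcs (L_obj H)" if uv: "(u, v) \<in> arcs (L_obj G)" for u v
  proof -
    obtain p where p: "longest_path G (root G) v p" "(u, v) \<in> set (zip p (tl p))"
      using uv[unfolded aL] by blast
    have "longest_path H (root H) (h v) (map h p)" using lp[OF p(1)] hr by simp
    moreover have "(h u, h v) \<in> set (zip (map h p) (tl (map h p)))" using p(2) zip_map[of h p] by auto
    ultimately show ?thesis unfolding L_obj_def by auto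
  qed
  have eL: "eord (L_obj G) u v1 v2 \<longleftrightarrow> eord G u v1 v2 \<and> (u, v1) \<in> arcs (L_obj G) \<and> (u, v2) \<in> arcs (L_obj G)" for u v1 v2
    unfolding aL by (simp add: L_obj_def)
  have aH: "(u, v) \<in> arcs (L_obj H) \<longleftrightarrow> (\<exists>p. longest_path H (root H) v p \<and> (u, v) \<in> set (zip p (tl p)))" for u v
    unfolding L_obj_def by simp
  have eH: "eord (L_obj H) u v1 v2 \<longleftrightarrow> eord H u v1 v2 \<and> (u, v1) \<in> arcs (L_obj H) \<and> (u, v2) \<in> arcs (L_obj H)" for u v1 v2
    unfolding aH by (simp add: L_obj_def)
  have e: "eord (L_obj H) (h u) (h v1) (h v2)" if "eord (L_obj G) u v1 v2" for u v1 v2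
  proof -
    have "eord G u v1 v2" "(u, v1) \<in> arcs (L_obj G)" "(u, v2) \<in> arcs (L_obj G)" using that eL by auto
    moreover have "\<forall>u v1 v2. eord G u v1 v2 \<longrightarrow> eord H (h u) (h v1) (h v2)" using hom unfolding eo_hom_def by blast
    ultimately have "eord H (h u) (h v1) (h v2)" "(h u, h v1) \<in> arcs (L_obj H)" "(h u, h v2) \<in> arcs (L_obj H)"
      using arc by auto
    then show ?thesis unfolding eH by simp
  qed
  have vr: "verts (L_obj G) = verts G" "verts (L_obj H) = verts H" "root (L_obj G) = root G" "root (L_obj H) = root H"
    unfolding L_obj_def by simp_all
  have h1: "\<forall>v \<in> verts G. h v \<in> verts H" and h3: "\<forall>v \<in> verts G. h v = root H \<longleftrightarrow> v = root G"
    using hom unfolding eo_hom_def by auto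
  show ?thesis unfolding eo_hom_def L_mor_def vr
  proof (intro conjI)
    show "\<forall>u v. (u, v) \<in> arcs (L_obj G) \<longrightarrow> (h u, h v) \<in> arcs (L_obj H)" using arc by simp
    show "\<forall>u v1 v2. eord (L_obj G) u v1 v2 \<longrightarrow> eord (L_obj H) (h u) (h v1) (h v2)" using e by simp
  qed (use h1 h3 in simp_all)
qed

theorem lemma10p7:
  shows "(\<forall>G :: 'a eograph. tarb_obj G \<longrightarrow> finarb_obj (L_obj G)) \<and>
    (\<forall>(G :: 'a eograph) (H :: 'b eograph) h. tarb_mor G H h \<longrightarrow>
        eo_hom (L_obj G) (L_obj H) (L_mor h)) \<and>
    (\<forall>G :: 'a eograph. tarb_obj G \<longrightarrow> (\<forall>v \<in> verts (L_obj G). L_mor id v = v)) \<and>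
    (\<forall>(G :: 'a eograph) (H :: 'b eograph) (K :: 'c eograph) h k.
        tarb_mor G H h \<longrightarrow> tarb_mor H K k \<longrightarrow>
        (\<forall>v \<in> verts (L_obj G). L_mor (k \<circ> h) v = (L_mor k \<circ> L_mor h) v))"
proof (intro conjI allI impI)
  fix G :: "'a eograph" assume "tarb_obj G"
  then obtain T :: "'a eograph" where "wf_eog G" "wf_eog T" "arborescence T" "verts T = verts G"
    "root T = root G" "arcs G = (arcs T)\<^sup>+" unfolding tarb_obj_def by blast
  then show "finarb_obj (L_obj G)" by (rule part1)
next
  fix G :: "'a eograph" and H :: "'b eograph" and h assume "tarb_mor G H h"
  then show "eo_hom (L_obj G) (L_obj H) (L_mor h)" by (rule part2)
qed (auto simp: L_mor_def)

end
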